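(* Let $n\ge2$, $\omega\in\mathbb{R}^n$, $k\in\mathbb{R}_{>0}^n$ satisfy (IC1) $\sum_\mu\omega_\mu=0$, (IC2) $\omega\ne0$, (IC3) $\left|\frac{\omega_1}{k_1}\right|\le\cdots\le\left|\frac{\omega_n}{k_n}\right|$, and (IC4) $k_1\ge k_2\ge\cdots\ge k_n$. For $\sigma\in\{-1,+1\}^n$ let $f_\sigma(R)=-R+\frac1n\sum_{\mu=1}^n\sigma_\mu\sqrt{k_\mu^2R-\omega_\mu^2}$. (1) If $\sigma=(+1,\ldots,+1)$ and $f_\sigma$ has no positive roots, then $f_{\sigma'}$ has no positive roots for every $\sigma'\in\{-1,+1\}^n$. (2) If $\sigma$ has exactly one entry equal to $-1$ and $f_\sigma$ has no positive roots, then $f_{\sigma'}$ has no positive roots for every $\sigma'\in\{-1,+1\}^n$ that is smaller than $\sigma$ in the binary ordering. (3) Suppose $\sigma$ has at least two entries equal to $-1$ and $f_\sigma$ has no positive roots. Let $\ell$ be the position of the second-to-last entry equal to $-1$ in $\sigma$, and write $\sigma=(\rho_1,\rho_2)$ with $\rho_1=(\sigma_1,\ldots,\sigma_{\ell-1},-1)$ and $\rho_2=(\sigma_{\ell+1},\ldots,\sigma_n)$. Then for every $\rho_2'\in\{-1,+1\}^{n-\ell}$ that is smaller than $\rho_2$ in the binary ordering, $f_{(\rho_1,\rho_2')}$ has no positive roots.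
   Context: Square roots are nonnegative real square roots; a positive root of $f_\sigma$ is a real $R>0$ with $k_\mu^2R-\omega_\mu^2\ge0$ for all $\mu$ and $f_\sigma(R)=0$. Binary ordering: a sign vector $\tau=(\tau_1,\ldots,\tau_m)\in\{-1,+1\}^m$ is identified with the integer whose binary digits, from most significant to least significant, are $b_1b_2\cdots b_m$ with $b_i=1$ if $\tau_i=+1$ and $b_i=0$ if $\tau_i=-1$ (e.g. $(+1,-1)\equiv 10_2=2$); vectors are compared via these integers. *)

theory Defs
  imports Complex_Main
begin

text \<open>Vectors in R^n and sign vectors are represented as lists of length n,
  indexed 0..n-1 (entry i corresponds to the paper's index i+1).\<close>

definition sign_vec :: "nat \<Rightarrow> int list \<Rightarrow> bool" where
  "sign_vec m s \<longleftrightarrow> length s = m \<and> set s \<subseteq> {-1, 1}"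

text \<open>Binary ordering: +1 is digit 1, -1 is digit 0, first entry most significant.\<close>
definition bin_val :: "int list \<Rightarrow> nat" where
  "bin_val s = foldl (\<lambda>a t. 2 * a + (if t = 1 then 1 else 0)) 0 s"

definition f_sigma :: "real list \<Rightarrow> real list \<Rightarrow> int list \<Rightarrow> real \<Rightarrow> real" where
  "f_sigma \<omega> k \<sigma> R = - R + (1 / real (length \<omega>)) *
      (\<Sum>\<mu><length \<omega>. real_of_int (\<sigma> ! \<mu>) * sqrt ((k ! \<mu>)^2 * R - (\<omega> ! \<mu>)^2))"

definition has_pos_root :: "real list \<Rightarrow> real list \<Rightarrow> int list \<Rightarrow> bool" where
  "has_pos_root \<omega> k \<sigma> \<longleftrightarrow> (\<exists>R>0. (\<forall>\<mu><length \<omega>. (k ! \<mu>)^2 * R - (\<omega> ! \<mu>)^2 \<ge> 0)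
      \<and> f_sigma \<omega> k \<sigma> R = 0)"

end

theory Submission
  imports Defs
begin

definition bstep :: "nat \<Rightarrow> int \<Rightarrow> nat" where
  "bstep a t = 2 * a + (if t = 1 then 1 else 0)"

lemma foldl_acc: "foldl bstep a s = a * 2 ^ length s + foldl bstep 0 s"
proof (induction s arbitrary: a)
  case Nil then show ?case by simp
next
  case (Cons x s)
  have h1: "foldl bstep a (x # s) = bstep a x * 2 ^ length s + foldl bstep 0 s"
    using Cons[of "bstep a x"] by (simp only: foldl_Cons)
  have h2: "foldl bstep 0 (x # s) = bstep 0 x * 2 ^ length s + foldl bstep 0 s"
    using Cons[of "bstep 0 x"] by (simp only: foldl_Cons)
  have h3: "bstep a x = 2 * a + bstep 0 x" by (simp add: bstep_def)
  show ?case unfolding h1 h2 h3 length_Cons power_Suc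
    by (simp only: distrib_right mult.assoc add.assoc mult.commute[of a])
qed

lemma bin_val_alt: "bin_val s = foldl bstep 0 s"
proof -
  have "(\<lambda>a t. 2 * a + (if t = (1::int) then 1 else 0)) = bstep"
    by (rule ext, rule ext) (simp add: bstep_def)
  then show ?thesis unfolding bin_val_def by simp
qed

lemma bin_val_cons: "bin_val (x # xs) = (if x = 1 then 1 else 0) * 2 ^ length xs + bin_val xs"
proof -
  have "bin_val (x # xs) = foldl bstep (bstep 0 x) xs" by (simp only: bin_val_alt foldl_Cons)
  also have "\<dots> = bstep 0 x * 2 ^ length xs + bin_val xs" unfolding bin_val_alt by (rule foldl_acc)
  finally show ?thesis by (simp add: bstep_def)
qed

lemma bin_val_lt: "bin_val xs < 2 ^ length xs"
proof (induction xs)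
  case Nil then show ?case by (simp add: bin_val_def)
next
  case (Cons x xs)
  have "(if x = 1 then 1 else 0) * 2 ^ length xs \<le> (2::nat) ^ length xs" by simp
  then show ?case using Cons by (simp only: bin_val_cons length_Cons power_Suc)
qed

lemma bin_val_diff:
  assumes "length xs = length ys" "set xs \<subseteq> {-1,1}" "set ys \<subseteq> {-1,1}" "bin_val xs < bin_val ys"
  shows "\<exists>i < length xs. xs ! i = -1 \<and> ys ! i = 1 \<and> (\<forall>\<mu><i. xs ! \<mu> = ys ! \<mu>)"
  using assms
proof (induction xs arbitrary: ys)
  case Nil then show ?case by (simp add: bin_val_def)
next
  case (Cons x xs)
  then obtain y ys' where ys: "ys = y # ys'" by (cases ys) auto
  show ?case
  proof (cases "x = y")
    case True
    with Cons.prems ys have "bin_val xs < bin_val ys'" by (simp add: bin_val_cons)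
    moreover have "length xs = length ys'" "set xs \<subseteq> {-1,1}" "set ys' \<subseteq> {-1,1}"
      using Cons.prems ys by auto
    ultimately obtain i where "i < length xs" "xs ! i = -1" "ys' ! i = 1"
      "\<forall>\<mu><i. xs ! \<mu> = ys' ! \<mu>" using Cons.IH[of ys'] by blast
    then show ?thesis using True ys
      by (intro exI[of _ "Suc i"]) (auto simp: less_Suc_eq_0_disj)
  next
    case False
    have "\<not> (x = 1 \<and> y = -1)"
    proof
      assume "x = 1 \<and> y = -1"
      then have "bin_val (x#xs) \<ge> 2 ^ length xs" "bin_val ys = bin_val ys'"
        using ys by (auto simp: bin_val_cons)
      moreover have "bin_val ys' < 2 ^ length xs" using bin_val_lt[of ys'] Cons.prems ys by simp
      ultimately show False using Cons.prems by simp
    qed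
    moreover have "x \<in> {-1,1}" using Cons.prems(2) by simp
    moreover have "y \<in> {-1,1}" using Cons.prems(3) ys by simp
    ultimately have xy: "x = -1" "y = 1" using False by auto
    show ?thesis by (rule exI[of _ 0]) (simp add: ys xy)
  qed
qed

lemma sv_entry: "sign_vec n s \<Longrightarrow> i < n \<Longrightarrow> s ! i = -1 \<or> s ! i = 1"
proof -
  assume a: "sign_vec n s" "i < n"
  then have "s ! i \<in> set s" using nth_mem[of i s] unfolding sign_vec_def by auto
  then show ?thesis using a unfolding sign_vec_def by blast
qed

lemma g_mono:
  fixes \<omega> k :: "real list"
  assumes kpos: "\<forall>i<n. k ! i > 0"
    and IC3: "\<forall>i j. i \<le> j \<and> j < n \<longrightarrow> \<bar>\<omega> ! i / k ! i\<bar> \<le> \<bar>\<omega> ! j / k ! j\<bar>"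
    and IC4: "\<forall>i j. i \<le> j \<and> j < n \<longrightarrow> k ! i \<ge> k ! j"
    and ij: "i \<le> j" "j < n"
    and d: "(k ! j)^2 * R - (\<omega> ! j)^2 \<ge> 0"
  shows "sqrt ((k ! j)^2 * R - (\<omega> ! j)^2) \<le> sqrt ((k ! i)^2 * R - (\<omega> ! i)^2)"
proof -
  define ai where "ai = (\<omega> ! i / k ! i)^2"
  define aj where "aj = (\<omega> ! j / k ! j)^2"
  have ki: "k ! i > 0" and kj: "k ! j > 0" using kpos ij by auto
  have eqi: "(k ! i)^2 * R - (\<omega> ! i)^2 = (k ! i)^2 * (R - ai)"
    using ki by (simp add: ai_def field_simps power2_eq_square)
  have eqj: "(k ! j)^2 * R - (\<omega> ! j)^2 = (k ! j)^2 * (R - aj)"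
    using kj by (simp add: aj_def field_simps power2_eq_square)
  have "\<bar>\<omega> ! i / k ! i\<bar> \<le> \<bar>\<omega> ! j / k ! j\<bar>" using IC3 ij by blast
  then have "ai \<le> aj" unfolding ai_def aj_def by (metis abs_le_square_iff)
  moreover have "R - aj \<ge> 0" using d eqj kj
    by (metis zero_le_mult_iff zero_less_power not_le less_le)
  moreover have "(k ! j)^2 \<le> (k ! i)^2" using IC4 ij kj by (simp add: power_mono)
  ultimately have "(k ! j)^2 * (R - aj) \<le> (k ! i)^2 * (R - ai)"
    by (intro mult_mono) auto
  then show ?thesis using eqi eqj by simp
qed

lemma sum_cmp:
  fixes \<omega> k :: "real list"
  assumes kpos: "\<forall>i<n. k ! i > 0"
    and IC3: "\<forall>i j. i \<le> j \<and> j < n \<longrightarrow> \<bar>\<omega> ! i / k ! i\<bar> \<le> \<bar>\<omega> ! j / k ! j\<bar>"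
    and IC4: "\<forall>i j. i \<le> j \<and> j < n \<longrightarrow> k ! i \<ge> k ! j"
    and dom: "\<forall>\<mu><n. (k ! \<mu>)^2 * R - (\<omega> ! \<mu>)^2 \<ge> 0"
    and sv: "sign_vec n \<sigma>" "sign_vec n \<sigma>'"
    and i: "i < n" "\<sigma> ! i = 1" "\<sigma>' ! i = -1" "\<forall>\<mu><i. \<sigma>' ! \<mu> = \<sigma> ! \<mu>"
    and j: "\<forall>\<mu><n. \<mu> \<noteq> j \<longrightarrow> \<sigma>' ! \<mu> \<le> \<sigma> ! \<mu>"
  shows "(\<Sum>\<mu><n. real_of_int (\<sigma>' ! \<mu>) * sqrt ((k ! \<mu>)^2 * R - (\<omega> ! \<mu>)^2))
       \<le> (\<Sum>\<mu><n. real_of_int (\<sigma> ! \<mu>) * sqrt ((k ! \<mu>)^2 * R - (\<omega> ! \<mu>)^2))"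
proof -
  define G where "G \<mu> = sqrt ((k ! \<mu>)^2 * R - (\<omega> ! \<mu>)^2)" for \<mu>
  define d where "d \<mu> = real_of_int (\<sigma> ! \<mu> - \<sigma>' ! \<mu>) * G \<mu>" for \<mu>
  have G0: "\<mu> < n \<Longrightarrow> G \<mu> \<ge> 0" for \<mu> using dom unfolding G_def by simp
  have "0 \<le> (\<Sum>\<mu><n. d \<mu>)"
  proof (cases "j < n \<and> \<sigma>' ! j > \<sigma> ! j")
    case False
    have "\<forall>\<mu><n. \<sigma>' ! \<mu> \<le> \<sigma> ! \<mu>"
    proof (intro allI impI)
      fix \<mu> assume "\<mu> < n"
      then show "\<sigma>' ! \<mu> \<le> \<sigma> ! \<mu>" using j False by (cases "\<mu> = j") auto
    qed
    show ?thesis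
    proof (rule sum_nonneg)
      fix b assume "b \<in> {..<n}"
      then have b: "b < n" by simp
      then have "\<sigma>' ! b \<le> \<sigma> ! b" using \<open>\<forall>\<mu><n. \<sigma>' ! \<mu> \<le> \<sigma> ! \<mu>\<close> by blast
      then have "0 \<le> real_of_int (\<sigma> ! b - \<sigma>' ! b)" by simp
      then show "0 \<le> d b" unfolding d_def using G0[OF b] by (rule mult_nonneg_nonneg)
    qed
  next
    case True
    then have jn: "j < n" and sj: "\<sigma> ! j = -1" "\<sigma>' ! j = 1"
      using sv_entry[OF sv(1), of j] sv_entry[OF sv(2), of j] by auto
    have "j \<noteq> i" using sj i by auto
    moreover have "\<not> j < i"
    proof
      assume "j < i"
      then have "\<sigma>' ! j = \<sigma> ! j" using i(4) by blast
      then show False using sj by simp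
    qed
    ultimately have ij: "i < j" by simp
    have "(\<Sum>\<mu>\<in>{i,j}. d \<mu>) \<le> (\<Sum>\<mu><n. d \<mu>)"
    proof (rule sum_mono2)
      show "{i, j} \<subseteq> {..<n}" using i jn by auto
      fix b assume "b \<in> {..<n} - {i,j}"
      then have b: "b < n" "b \<noteq> j" by auto
      then have "\<sigma>' ! b \<le> \<sigma> ! b" using j by blast
      then have "0 \<le> real_of_int (\<sigma> ! b - \<sigma>' ! b)" by simp
      then show "0 \<le> d b" unfolding d_def using G0[OF b(1)] by (rule mult_nonneg_nonneg)
    qed auto
    moreover have "(\<Sum>\<mu>\<in>{i,j}. d \<mu>) = d i + d j"
      using ij by simp
    moreover have "d i = 2 * G i" unfolding d_def using i(2,3) by simp
    moreover have "d j = - 2 * G j" unfolding d_def using sj by simp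
    moreover have "G j \<le> G i"
    proof -
      have dj: "(k ! j)^2 * R - (\<omega> ! j)^2 \<ge> 0" using dom jn by blast
      have "i \<le> j" using ij by simp
      then show ?thesis unfolding G_def by (rule g_mono[OF kpos IC3 IC4 _ jn dj])
    qed
    ultimately show ?thesis by linarith
  qed
  moreover have deq: "d \<mu> = real_of_int (\<sigma> ! \<mu>) * G \<mu> - real_of_int (\<sigma>' ! \<mu>) * G \<mu>" for \<mu>
    unfolding d_def by (simp only: of_int_diff left_diff_distrib)
  have "(\<Sum>\<mu><n. d \<mu>) = (\<Sum>\<mu><n. real_of_int (\<sigma> ! \<mu>) * G \<mu> - real_of_int (\<sigma>' ! \<mu>) * G \<mu>)"
    by (simp only: deq)
  also have "\<dots> = (\<Sum>\<mu><n. real_of_int (\<sigma> ! \<mu>) * G \<mu>) - (\<Sum>\<mu><n. real_of_int (\<sigma>' ! \<mu>) * G \<mu>)"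
    by (rule sum_subtractf)
  ultimately have "0 \<le> (\<Sum>\<mu><n. real_of_int (\<sigma> ! \<mu>) * G \<mu>) - (\<Sum>\<mu><n. real_of_int (\<sigma>' ! \<mu>) * G \<mu>)"
    by linarith
  then show ?thesis unfolding G_def by linarith
qed

lemma transfer:
  fixes \<omega> k :: "real list"
  assumes len: "length \<omega> = n" "length k = n" and n1: "n \<ge> 1"
    and kpos: "\<forall>i<n. k ! i > 0"
    and sv: "sign_vec n \<sigma>"
    and nr: "\<not> has_pos_root \<omega> k \<sigma>"
    and cmp: "\<And>R. R > 0 \<Longrightarrow> \<forall>\<mu><n. (k ! \<mu>)^2 * R - (\<omega> ! \<mu>)^2 \<ge> 0 \<Longrightarrow>
         (\<Sum>\<mu><n. real_of_int (\<sigma>' ! \<mu>) * sqrt ((k ! \<mu>)^2 * R - (\<omega> ! \<mu>)^2))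
       \<le> (\<Sum>\<mu><n. real_of_int (\<sigma> ! \<mu>) * sqrt ((k ! \<mu>)^2 * R - (\<omega> ! \<mu>)^2))"
  shows "\<not> has_pos_root \<omega> k \<sigma>'"
proof
  assume "has_pos_root \<omega> k \<sigma>'"
  then obtain R1 where R1: "R1 > 0" "\<forall>\<mu><n. (k ! \<mu>)^2 * R1 - (\<omega> ! \<mu>)^2 \<ge> 0"
    "f_sigma \<omega> k \<sigma>' R1 = 0" unfolding has_pos_root_def using len by auto
  have "f_sigma \<omega> k \<sigma>' R1 \<le> f_sigma \<omega> k \<sigma> R1"
    unfolding f_sigma_def using cmp[OF R1(1,2)] len by (simp add: divide_right_mono)
  then have fa: "0 \<le> f_sigma \<omega> k \<sigma> R1" using R1 by simp
  define K where "K = (\<Sum>\<mu><n. k ! \<mu>)"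
  have K0: "K \<ge> 0" unfolding K_def using kpos by (intro sum_nonneg) auto
  define M where "M = R1 + (K + 1)^2"
  have M0: "M > 0" using R1 unfolding M_def by (simp add: add_pos_nonneg)
  have sM: "sqrt M \<ge> K + 1" unfolding M_def using R1 K0
    by (metis add_nonneg_nonneg le_add_same_cancel2 less_le real_le_rsqrt zero_le_one)
  have domup: "\<forall>\<mu><n. (k ! \<mu>)^2 * x - (\<omega> ! \<mu>)^2 \<ge> 0" if "R1 \<le> x" for x
  proof (intro allI impI)
    fix \<mu> assume "\<mu> < n"
    then have "(k ! \<mu>)^2 * R1 - (\<omega> ! \<mu>)^2 \<ge> 0" using R1 by auto
    moreover have "(k ! \<mu>)^2 * R1 \<le> (k ! \<mu>)^2 * x" using that by (simp add: mult_left_mono)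
    ultimately show "(k ! \<mu>)^2 * x - (\<omega> ! \<mu>)^2 \<ge> 0" by linarith
  qed
  have domM: "\<forall>\<mu><n. (k ! \<mu>)^2 * M - (\<omega> ! \<mu>)^2 \<ge> 0" using domup unfolding M_def by simp
  define X where "X = (\<Sum>\<mu><n. real_of_int (\<sigma> ! \<mu>) * sqrt ((k ! \<mu>)^2 * M - (\<omega> ! \<mu>)^2))"
  have "X \<le> (\<Sum>\<mu><n. k ! \<mu> * sqrt M)" unfolding X_def
  proof (rule sum_mono)
    fix \<mu> assume "\<mu> \<in> {..<n}"
    then have kp: "k ! \<mu> > 0" and s: "\<sigma> ! \<mu> = -1 \<or> \<sigma> ! \<mu> = 1"
      using kpos sv_entry[OF sv] by auto
    have "sqrt ((k ! \<mu>)^2 * M - (\<omega> ! \<mu>)^2) \<le> sqrt ((k ! \<mu>)^2 * M)" by simp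
    also have "\<dots> = k ! \<mu> * sqrt M" using kp M0 by (simp add: real_sqrt_mult)
    finally have a: "sqrt ((k ! \<mu>)^2 * M - (\<omega> ! \<mu>)^2) \<le> k ! \<mu> * sqrt M" .
    have z1: "0 \<le> sqrt ((k ! \<mu>)^2 * M - (\<omega> ! \<mu>)^2)" using domM \<open>\<mu> \<in> {..<n}\<close> by simp
    have z2: "0 \<le> k ! \<mu> * sqrt M" using kp M0 by simp
    from s show "real_of_int (\<sigma> ! \<mu>) * sqrt ((k ! \<mu>)^2 * M - (\<omega> ! \<mu>)^2) \<le> k ! \<mu> * sqrt M"
    proof
      assume "\<sigma> ! \<mu> = -1" then show ?thesis using z1 z2 by (simp only: of_int_minus of_int_1)
    next
      assume "\<sigma> ! \<mu> = 1" then show ?thesis using a by simp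
    qed
  qed
  also have "\<dots> = K * sqrt M" unfolding K_def by (simp add: sum_distrib_right)
  finally have XK: "X \<le> K * sqrt M" .
  have "(1 / real n) * X \<le> K * sqrt M"
  proof (cases "X \<le> 0")
    case True
    have "(1 / real n) * X \<le> 0" using True by (intro mult_nonneg_nonpos) auto
    moreover have "0 \<le> K * sqrt M" using K0 M0 by simp
    ultimately show ?thesis by linarith
  next
    case False
    have "(1 / real n) * X \<le> X" using n1 False
      by (simp add: divide_le_eq)
    then show ?thesis using XK by linarith
  qed
  moreover have "K * sqrt M < M"
  proof -
    have "K * sqrt M < sqrt M * sqrt M" using sM M0 by (intro mult_strict_right_mono) auto
    then show ?thesis using M0 by simp
  qed
  ultimately have fb: "f_sigma \<omega> k \<sigma> M \<le> 0" unfolding f_sigma_def X_def using len by simp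
  have "R1 \<le> M" unfolding M_def by simp
  moreover have "\<forall>x. R1 \<le> x \<and> x \<le> M \<longrightarrow> isCont (f_sigma \<omega> k \<sigma>) x"
    unfolding f_sigma_def[abs_def] by (intro allI impI continuous_intros)
  ultimately obtain x where x: "R1 \<le> x" "x \<le> M" "f_sigma \<omega> k \<sigma> x = 0"
    using IVT2[of "f_sigma \<omega> k \<sigma>" M 0 R1] fa fb by auto
  have "\<forall>\<mu><n. (k ! \<mu>)^2 * x - (\<omega> ! \<mu>)^2 \<ge> 0" using domup x by blast
  moreover have "x > 0" using x R1 by linarith
  ultimately have "has_pos_root \<omega> k \<sigma>" unfolding has_pos_root_def using x len by blast
  then show False using nr by simp
qed

theorem theorem2:
  fixes n :: nat and \<omega> k :: "real list"
  assumes n2: "n \<ge> 2"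
    and len: "length \<omega> = n" "length k = n"
    and kpos: "\<forall>i<n. k ! i > 0"
    and IC1: "(\<Sum>i<n. \<omega> ! i) = 0"
    and IC2: "\<exists>i<n. \<omega> ! i \<noteq> 0"
    and IC3: "\<forall>i j. i \<le> j \<and> j < n \<longrightarrow> \<bar>\<omega> ! i / k ! i\<bar> \<le> \<bar>\<omega> ! j / k ! j\<bar>"
    and IC4: "\<forall>i j. i \<le> j \<and> j < n \<longrightarrow> k ! i \<ge> k ! j"
  shows
    "(\<not> has_pos_root \<omega> k (replicate n 1) \<longrightarrow>
        (\<forall>\<sigma>'. sign_vec n \<sigma>' \<longrightarrow> \<not> has_pos_root \<omega> k \<sigma>'))
   \<and> (\<forall>\<sigma>. sign_vec n \<sigma> \<and> card {i. i < n \<and> \<sigma> ! i = -1} = 1 \<and> \<not> has_pos_root \<omega> k \<sigma> \<longrightarrow>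
        (\<forall>\<sigma>'. sign_vec n \<sigma>' \<and> bin_val \<sigma>' < bin_val \<sigma> \<longrightarrow> \<not> has_pos_root \<omega> k \<sigma>'))
   \<and> (\<forall>\<sigma> l. sign_vec n \<sigma> \<and> card {i. i < n \<and> \<sigma> ! i = -1} \<ge> 2 \<and> \<not> has_pos_root \<omega> k \<sigma>
        \<and> l < n \<and> \<sigma> ! l = -1 \<and> card {i. l < i \<and> i < n \<and> \<sigma> ! i = -1} = 1 \<longrightarrow>
        (\<forall>\<rho>2'. sign_vec (n - (l + 1)) \<rho>2' \<and> bin_val \<rho>2' < bin_val (drop (l + 1) \<sigma>) \<longrightarrow>
           \<not> has_pos_root \<omega> k (take (l + 1) \<sigma> @ \<rho>2')))"
proof -
  have n1: "n \<ge> 1" using n2 by simp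
  have P1: "\<not> has_pos_root \<omega> k (replicate n 1) \<longrightarrow>
        (\<forall>\<sigma>'. sign_vec n \<sigma>' \<longrightarrow> \<not> has_pos_root \<omega> k \<sigma>')"
  proof (intro impI allI)
    fix \<sigma>' assume nr: "\<not> has_pos_root \<omega> k (replicate n 1)" and sv': "sign_vec n \<sigma>'"
    have sv: "sign_vec n (replicate n (1::int))" unfolding sign_vec_def by auto
    show "\<not> has_pos_root \<omega> k \<sigma>'"
    proof (rule transfer[OF len n1 kpos sv nr])
      fix R :: real assume R: "R > 0" "\<forall>\<mu><n. (k ! \<mu>)^2 * R - (\<omega> ! \<mu>)^2 \<ge> 0"
      show "(\<Sum>\<mu><n. real_of_int (\<sigma>' ! \<mu>) * sqrt ((k ! \<mu>)^2 * R - (\<omega> ! \<mu>)^2))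
       \<le> (\<Sum>\<mu><n. real_of_int (replicate n 1 ! \<mu>) * sqrt ((k ! \<mu>)^2 * R - (\<omega> ! \<mu>)^2))"
      proof (rule sum_mono)
        fix \<mu> assume m: "\<mu> \<in> {..<n}"
        then have "\<sigma>' ! \<mu> = -1 \<or> \<sigma>' ! \<mu> = 1" using sv_entry[OF sv'] by auto
        moreover have "0 \<le> sqrt ((k ! \<mu>)^2 * R - (\<omega> ! \<mu>)^2)" using R m by simp
        ultimately show "real_of_int (\<sigma>' ! \<mu>) * sqrt ((k ! \<mu>)^2 * R - (\<omega> ! \<mu>)^2)
           \<le> real_of_int (replicate n 1 ! \<mu>) * sqrt ((k ! \<mu>)^2 * R - (\<omega> ! \<mu>)^2)"
          using m by auto
      qed
    qed
  qed
  have P2: "\<forall>\<sigma>. sign_vec n \<sigma> \<and> card {i. i < n \<and> \<sigma> ! i = -1} = 1 \<and> \<not> has_pos_root \<omega> k \<sigma> \<longrightarrow>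
        (\<forall>\<sigma>'. sign_vec n \<sigma>' \<and> bin_val \<sigma>' < bin_val \<sigma> \<longrightarrow> \<not> has_pos_root \<omega> k \<sigma>')"
  proof (intro allI impI)
    fix \<sigma> \<sigma>' assume A: "sign_vec n \<sigma> \<and> card {i. i < n \<and> \<sigma> ! i = -1} = 1 \<and> \<not> has_pos_root \<omega> k \<sigma>"
      and B: "sign_vec n \<sigma>' \<and> bin_val \<sigma>' < bin_val \<sigma>"
    have sv: "sign_vec n \<sigma>" and nr: "\<not> has_pos_root \<omega> k \<sigma>" and sv': "sign_vec n \<sigma>'"
      using A B by auto
    obtain j where J: "{i. i < n \<and> \<sigma> ! i = -1} = {j}" using A card_1_singletonE by blast
    obtain i where I: "i < n" "\<sigma>' ! i = -1" "\<sigma> ! i = 1" "\<forall>\<mu><i. \<sigma>' ! \<mu> = \<sigma> ! \<mu>"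
      using bin_val_diff[of \<sigma>' \<sigma>] sv sv' B unfolding sign_vec_def by auto
    have jc: "\<forall>\<mu><n. \<mu> \<noteq> j \<longrightarrow> \<sigma>' ! \<mu> \<le> \<sigma> ! \<mu>"
    proof (intro allI impI)
      fix \<mu> assume m: "\<mu> < n" "\<mu> \<noteq> j"
      then have "\<sigma> ! \<mu> \<noteq> -1" using J by blast
      then have "\<sigma> ! \<mu> = 1" using sv_entry[OF sv m(1)] by auto
      then show "\<sigma>' ! \<mu> \<le> \<sigma> ! \<mu>" using sv_entry[OF sv' m(1)] by auto
    qed
    show "\<not> has_pos_root \<omega> k \<sigma>'"
      by (rule transfer[OF len n1 kpos sv nr])
        (rule sum_cmp[OF kpos IC3 IC4 _ sv sv' I(1,3,2,4) jc], auto)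
  qed
  have P3: "\<forall>\<sigma> l. sign_vec n \<sigma> \<and> card {i. i < n \<and> \<sigma> ! i = -1} \<ge> 2 \<and> \<not> has_pos_root \<omega> k \<sigma>
        \<and> l < n \<and> \<sigma> ! l = -1 \<and> card {i. l < i \<and> i < n \<and> \<sigma> ! i = -1} = 1 \<longrightarrow>
        (\<forall>\<rho>2'. sign_vec (n - (l + 1)) \<rho>2' \<and> bin_val \<rho>2' < bin_val (drop (l + 1) \<sigma>) \<longrightarrow>
           \<not> has_pos_root \<omega> k (take (l + 1) \<sigma> @ \<rho>2'))"
  proof (intro allI impI)
    fix \<sigma> l \<rho> assume A: "sign_vec n \<sigma> \<and> card {i. i < n \<and> \<sigma> ! i = -1} \<ge> 2 \<and> \<not> has_pos_root \<omega> k \<sigma>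
        \<and> l < n \<and> \<sigma> ! l = -1 \<and> card {i. l < i \<and> i < n \<and> \<sigma> ! i = -1} = 1"
      and B: "sign_vec (n - (l + 1)) \<rho> \<and> bin_val \<rho> < bin_val (drop (l + 1) \<sigma>)"
    define m where "m = l + 1"
    define \<tau> where "\<tau> = take m \<sigma> @ \<rho>"
    have sv: "sign_vec n \<sigma>" and nr: "\<not> has_pos_root \<omega> k \<sigma>" and ln: "l < n"
      and svr: "sign_vec (n - m) \<rho>" and bv: "bin_val \<rho> < bin_val (drop m \<sigma>)"
      using A B unfolding m_def by auto
    have lens: "length \<sigma> = n" using sv unfolding sign_vec_def by simp
    have mn: "m \<le> n" using ln unfolding m_def by simp
    have svt: "sign_vec n \<tau>" using sv svr mn lens unfolding sign_vec_def \<tau>_def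
      by (auto dest: in_set_takeD)
    have t1: "\<tau> ! \<mu> = \<sigma> ! \<mu>" if "\<mu> < m" for \<mu>
      using that mn lens unfolding \<tau>_def by (simp add: nth_append)
    have t2: "\<tau> ! \<mu> = \<rho> ! (\<mu> - m)" "\<sigma> ! \<mu> = drop m \<sigma> ! (\<mu> - m)" if "m \<le> \<mu>" "\<mu> < n" for \<mu>
      using that mn lens unfolding \<tau>_def by (simp_all add: nth_append)
    obtain j where J: "{i. l < i \<and> i < n \<and> \<sigma> ! i = -1} = {j}" using A card_1_singletonE by blast
    obtain i' where I': "i' < length \<rho>" "\<rho> ! i' = -1" "drop m \<sigma> ! i' = 1"
        "\<forall>\<mu><i'. \<rho> ! \<mu> = drop m \<sigma> ! \<mu>"
    proof -
      have "set (drop m \<sigma>) \<subseteq> {-1,1}" using sv set_drop_subset[of m \<sigma>] unfolding sign_vec_def by blast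
      moreover have "length \<rho> = length (drop m \<sigma>)" "set \<rho> \<subseteq> {-1,1}"
        using svr lens unfolding sign_vec_def by auto
      ultimately show ?thesis using bin_val_diff[of \<rho> "drop m \<sigma>"] bv that by blast
    qed
    have lr: "length \<rho> = n - m" using svr unfolding sign_vec_def by simp
    define i where "i = m + i'"
    have "i < n" using I' lr mn unfolding i_def by simp
    moreover have "\<tau> ! i = -1" using t2(1)[of i] I' \<open>i < n\<close> unfolding i_def by simp
    moreover have "\<sigma> ! i = 1" using t2(2)[of i] I' \<open>i < n\<close> unfolding i_def by simp
    moreover have "\<forall>\<mu><i. \<tau> ! \<mu> = \<sigma> ! \<mu>"
    proof (intro allI impI)
      fix \<mu> assume "\<mu> < i"
      show "\<tau> ! \<mu> = \<sigma> ! \<mu>"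
      proof (cases "\<mu> < m")
        case True then show ?thesis using t1 by simp
      next
        case False
        then show ?thesis using t2[of \<mu>] I'(4) \<open>\<mu> < i\<close> \<open>i < n\<close> unfolding i_def by simp
      qed
    qed
    moreover have jc: "\<forall>\<mu><n. \<mu> \<noteq> j \<longrightarrow> \<tau> ! \<mu> \<le> \<sigma> ! \<mu>"
    proof (intro allI impI)
      fix \<mu> assume mu: "\<mu> < n" "\<mu> \<noteq> j"
      show "\<tau> ! \<mu> \<le> \<sigma> ! \<mu>"
      proof (cases "\<mu> < m")
        case True then show ?thesis using t1 by simp
      next
        case False
        then have "l < \<mu>" unfolding m_def by simp
        then have "\<sigma> ! \<mu> \<noteq> -1" using J mu by blast
        then have "\<sigma> ! \<mu> = 1" using sv_entry[OF sv mu(1)] by auto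
        then show ?thesis using sv_entry[OF svt mu(1)] by auto
      qed
    qed
    ultimately have "\<not> has_pos_root \<omega> k \<tau>"
      by (intro transfer[OF len n1 kpos sv nr])
        (rule sum_cmp[OF kpos IC3 IC4 _ sv svt], auto)
    then show "\<not> has_pos_root \<omega> k (take (l + 1) \<sigma> @ \<rho>)" unfolding \<tau>_def m_def .
  qed
  show ?thesis using P1 P2 P3 by blast
qed

end
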